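(* Let $\ell>0$ and let $M$ have local coordinates $(x,y,\alpha,\beta)$ with $\cos\alpha\neq0$, $\cos\beta\neq0$. Let $X_3=\partial_\beta$ and $X_4=-\sin\beta\,\partial_\alpha+\ell\cos\beta(\cos\alpha\,\partial_x+\sin\alpha\,\partial_y)$. Then the change of coordinates $(x,y,\alpha,\beta)\mapsto(x,y,p,q)$ with $p=\tan\alpha$, $q=-\ell^{-1}\tan\beta\sec^3\alpha$ is a local diffeomorphism which maps $\mathrm{Span}(X_3)$ to $\mathrm{Span}(\partial_q)$ and $\mathrm{Span}(X_4)$ to $\mathrm{Span}\big(\partial_x+p\partial_y+q\partial_p+\tfrac{3pq^2}{1+p^2}\partial_q\big)$. Consequently, the Engel structure with a split $(M,\mathrm{Span}(X_3)\oplus\mathrm{Span}(X_4))$ is locally equivalent to the Engel structure with a split on the second jet space $\mathcal{J}^2$ (coordinates $(x,y,p=y',q=y'')$) associated with the third order ODE $y'''=\frac{3y'y''^2}{1+y'^2}$, given by the vertical direction $\partial_q$ and the total derivative direction of the equation; and the general solution of this ODE is $\nu(x^2+y^2)-2\xi x-2\eta y+\mu=0$ with real constants $\nu,\xi,\eta,\mu$, i.e. its solution graphs are circles and straight lines in the $(x,y)$-plane.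
   Context: An Engel structure with a split is a 4-manifold with a rank 2 distribution $\mathcal{D}$ whose derived flag has constant ranks $2,3,4$, together with a splitting $\mathcal{D}=\mathcal{D}_1\oplus\mathcal{D}_2$ into rank one subdistributions; two such are locally equivalent if a local diffeomorphism carries $\mathcal{D}_1$ to $\bar{\mathcal{D}}_1$ and $\mathcal{D}_2$ to $\bar{\mathcal{D}}_2$. For an ODE $y'''=F(x,y,y',y'')$ on $\mathcal{J}^2$ with coordinates $(x,y,p,q)$, the associated split is $\mathrm{Span}(\partial_q)\oplus\mathrm{Span}(\partial_x+p\partial_y+q\partial_p+F\partial_q)$. *)

theory Defs
  imports "HOL-Analysis.Analysis"
begin

text \<open>On M the coordinates are (x, y, alpha, beta);
on the second jet space J2 the coordinates are (x, y, p, q). Tangent vectors are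
represented by their coordinate components in the same tuple type.\<close>

type_synonym pt4 = "real \<times> real \<times> real \<times> real"

definition M_dom :: "pt4 set" where
  "M_dom = {(x, y, a, b). cos a \<noteq> 0 \<and> cos b \<noteq> 0}"

definition X3 :: "pt4 \<Rightarrow> pt4" where
  "X3 u = (0, 0, 0, 1)"

definition X4 :: "real \<Rightarrow> pt4 \<Rightarrow> pt4" where
  "X4 l = (\<lambda>(x, y, a, b). (l * cos b * cos a, l * cos b * sin a, - sin b, 0))"

definition Phi :: "real \<Rightarrow> pt4 \<Rightarrow> pt4" where
  "Phi l = (\<lambda>(x, y, a, b). (x, y, tan a, - (inverse l) * tan b * (inverse (cos a)) ^ 3))"

definition vert :: "pt4 \<Rightarrow> pt4" where
  "vert w = (0, 0, 0, 1)"

definition total_deriv :: "(real \<Rightarrow> real \<Rightarrow> real \<Rightarrow> real \<Rightarrow> real) \<Rightarrow> pt4 \<Rightarrow> pt4" where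
  "total_deriv F = (\<lambda>(x, y, p, q). (1, p, q, F x y p q))"

definition F_circ :: "real \<Rightarrow> real \<Rightarrow> real \<Rightarrow> real \<Rightarrow> real" where
  "F_circ x y p q = 3 * p * q ^ 2 / (1 + p ^ 2)"

definition local_diffeo_on :: "(pt4 \<Rightarrow> pt4) \<Rightarrow> pt4 set \<Rightarrow> bool" where
  "local_diffeo_on f U \<longleftrightarrow>
     (\<forall>u\<in>U. \<exists>V W g. open V \<and> u \<in> V \<and> V \<subseteq> U \<and> open W \<and> f ` V = W \<and>
        (\<forall>v\<in>V. g (f v) = v) \<and> (\<forall>w\<in>W. f (g w) = w) \<and>
        f differentiable_on V \<and> g differentiable_on W)"

definition maps_span_on :: "(pt4 \<Rightarrow> pt4) \<Rightarrow> pt4 set \<Rightarrow> (pt4 \<Rightarrow> pt4) \<Rightarrow> (pt4 \<Rightarrow> pt4) \<Rightarrow> bool" where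
  "maps_span_on f U X Y \<longleftrightarrow>
     (\<forall>u\<in>U. \<exists>D. (f has_derivative D) (at u) \<and> (\<exists>c. c \<noteq> 0 \<and> D (X u) = c *\<^sub>R Y (f u)))"

definition thrice_diff :: "(real \<Rightarrow> real) \<Rightarrow> (real \<Rightarrow> real) \<Rightarrow> (real \<Rightarrow> real) \<Rightarrow> (real \<Rightarrow> real) \<Rightarrow> real set \<Rightarrow> bool" where
  "thrice_diff f f1 f2 f3 I \<longleftrightarrow>
     (\<forall>x\<in>I. (f has_real_derivative f1 x) (at x) \<and> (f1 has_real_derivative f2 x) (at x) \<and>
             (f2 has_real_derivative f3 x) (at x))"

end

theory Submission
  imports Defs
begin


lemma zero_deriv:
  fixes G :: "real \<Rightarrow> real"
  assumes "open S" "x \<in> S" "\<forall>y\<in>S. G y = 0" "(G has_real_derivative d) (at x)"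
  shows "d = 0"
proof -
  have "((\<lambda>y. 0) has_real_derivative d) (at x)"
    using has_field_derivative_transform_within_open[OF assms(4) assms(1) assms(2)] assms(3) by auto
  then show ?thesis using DERIV_unique DERIV_const by blast
qed

lemma ode_back:
  assumes td: "thrice_diff f f1 f2 f3 {a<..<b}"
    and nz: "(\<nu>, \<xi>, \<eta>) \<noteq> (0, 0, 0)"
    and eq: "\<forall>x\<in>{a<..<b}. \<nu> * (x ^ 2 + (f x) ^ 2) - 2 * \<xi> * x - 2 * \<eta> * f x + \<mu> = 0"
    and x: "x \<in> {a<..<b}"
  shows "f3 x = F_circ x (f x) (f1 x) (f2 x)"
proof -
  let ?S = "{a<..<b::real}"
  have d: "\<And>y. y \<in> ?S \<Longrightarrow> (f has_real_derivative f1 y) (at y) \<and> (f1 has_real_derivative f2 y) (at y) \<and>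
             (f2 has_real_derivative f3 y) (at y)" using td unfolding thrice_diff_def by blast
  have E1: "\<forall>y\<in>?S. \<nu> * y - \<xi> + (\<nu> * f y - \<eta>) * f1 y = 0"
  proof
    fix y assume y: "y \<in> ?S"
    have "((\<lambda>x. \<nu> * (x ^ 2 + (f x) ^ 2) - 2 * \<xi> * x - 2 * \<eta> * f x + \<mu>) has_real_derivative
       \<nu> * (2 * y + 2 * f y * f1 y) - 2 * \<xi> - 2 * \<eta> * f1 y) (at y)"
      using d[OF y] by (auto intro!: derivative_eq_intros)
    then have "\<nu> * (2 * y + 2 * f y * f1 y) - 2 * \<xi> - 2 * \<eta> * f1 y = 0"
      by (rule zero_deriv[OF _ y eq, rotated]) simp
    then show "\<nu> * y - \<xi> + (\<nu> * f y - \<eta>) * f1 y = 0" by (simp add: algebra_simps)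
  qed
  have E2: "\<forall>y\<in>?S. \<nu> + \<nu> * (f1 y)^2 + (\<nu> * f y - \<eta>) * f2 y = 0"
  proof
    fix y assume y: "y \<in> ?S"
    have "((\<lambda>y. \<nu> * y - \<xi> + (\<nu> * f y - \<eta>) * f1 y) has_real_derivative
       \<nu> + \<nu> * (f1 y)^2 + (\<nu> * f y - \<eta>) * f2 y) (at y)"
      using d[OF y] by (auto intro!: derivative_eq_intros simp: power2_eq_square)
    then show "\<nu> + \<nu> * (f1 y)^2 + (\<nu> * f y - \<eta>) * f2 y = 0"
      by (rule zero_deriv[OF _ y E1, rotated]) simp
  qed
  have E3: "3 * \<nu> * f1 x * f2 x + (\<nu> * f x - \<eta>) * f3 x = 0"
  proof -
    have "((\<lambda>y. \<nu> + \<nu> * (f1 y)^2 + (\<nu> * f y - \<eta>) * f2 y) has_real_derivative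
       \<nu> * (2 * f1 x * f2 x) + (\<nu> * f1 x) * f2 x + (\<nu> * f x - \<eta>) * f3 x) (at x)"
      using d[OF x] by (auto intro!: derivative_eq_intros)
    then have "\<nu> * (2 * f1 x * f2 x) + (\<nu> * f1 x) * f2 x + (\<nu> * f x - \<eta>) * f3 x = 0"
      by (rule zero_deriv[OF _ x E2, rotated]) simp
    then show ?thesis by (simp add: algebra_simps)
  qed
  have E1x: "\<nu> * x - \<xi> + (\<nu> * f x - \<eta>) * f1 x = 0" using E1 x by blast
  have E2x: "\<nu> + \<nu> * (f1 x)^2 + (\<nu> * f x - \<eta>) * f2 x = 0" using E2 x by blast
  have pos: "1 + (f1 x)^2 > 0" by (simp add: add_pos_nonneg)
  show ?thesis
  proof (cases "\<nu> = 0")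
    case True
    then have "\<eta> \<noteq> 0" using nz E1x by auto
    then have "f2 x = 0" "f3 x = 0" using E2x E3 True by auto
    then show ?thesis by (simp add: F_circ_def)
  next
    case False
    let ?w = "\<nu> * f x - \<eta>"
    have w: "?w \<noteq> 0"
    proof
      assume "?w = 0"
      then have "\<nu> * (1 + (f1 x)^2) = 0" using E2x by (simp add: algebra_simps)
      then show False using False pos by simp
    qed
    have "?w * (f3 x * (1 + (f1 x)^2)) = ?w * (3 * f1 x * (f2 x)^2)"
    proof -
      have a: "?w * f2 x = - \<nu> * (1 + (f1 x)^2)" using E2x by (simp add: algebra_simps)
      have b: "?w * f3 x = - 3 * \<nu> * f1 x * f2 x" using E3 by (simp add: algebra_simps)
      have "?w * (f3 x * (1 + (f1 x)^2)) = (?w * f3 x) * (1 + (f1 x)^2)" by simp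
      also have "\<dots> = 3 * f1 x * f2 x * (- \<nu> * (1 + (f1 x)^2))" using b by simp
      also have "\<dots> = 3 * f1 x * f2 x * (?w * f2 x)" using a by simp
      finally show ?thesis by (simp add: power2_eq_square algebra_simps)
    qed
    then have "f3 x * (1 + (f1 x)^2) = 3 * f1 x * (f2 x)^2" using w by simp
    then show ?thesis using pos unfolding F_circ_def by (simp add: field_simps)
  qed
qed



lemma const_on:
  fixes G :: "real \<Rightarrow> real"
  assumes "\<And>y. y \<in> {a<..<b} \<Longrightarrow> (G has_real_derivative 0) (at y)"
  shows "\<exists>c. \<forall>y\<in>{a<..<b}. G y = c"
  using has_field_derivative_zero_constant[of "{a<..<b}" G] assms
  by (meson convex_real_interval has_field_derivative_at_within)

lemma ode_fwd:
  assumes td: "thrice_diff f f1 f2 f3 {a<..<b}"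
    and ode: "\<forall>x\<in>{a<..<b}. f3 x = F_circ x (f x) (f1 x) (f2 x)"
  shows "\<exists>\<nu> \<xi> \<eta> \<mu>::real. (\<nu>, \<xi>, \<eta>) \<noteq> (0, 0, 0) \<and>
             (\<forall>x\<in>{a<..<b}. \<nu> * (x ^ 2 + (f x) ^ 2) - 2 * \<xi> * x - 2 * \<eta> * f x + \<mu> = 0)"
proof -
  let ?S = "{a<..<b::real}"
  have d: "\<And>y. y \<in> ?S \<Longrightarrow> (f has_real_derivative f1 y) (at y) \<and> (f1 has_real_derivative f2 y) (at y) \<and>
             (f2 has_real_derivative f3 y) (at y)" using td unfolding thrice_diff_def by blast
  have pos: "\<And>y. 1 + (f1 y)^2 > 0" by (simp add: add_pos_nonneg)
  have o: "\<And>y. y \<in> ?S \<Longrightarrow> f3 y * (1 + (f1 y)^2) = 3 * f1 y * (f2 y)^2"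
  proof -
    fix y assume "y \<in> ?S"
    then have "f3 y = 3 * f1 y * (f2 y)^2 / (1 + (f1 y)^2)" using ode by (simp add: F_circ_def)
    then show "f3 y * (1 + (f1 y)^2) = 3 * f1 y * (f2 y)^2" using pos[of y] by (simp add: field_simps)
  qed
  have "\<exists>c. \<forall>y\<in>?S. (f2 y)^2 / (1 + (f1 y)^2)^3 = c"
  proof (rule const_on)
    fix y assume y: "y \<in> ?S"
    have p: "(1 + (f1 y)^2)^3 \<noteq> 0" using pos[of y] by simp
    have D: "((\<lambda>y. (f2 y)^2 / (1 + (f1 y)^2)^3) has_real_derivative
      (2 * f2 y * f3 y * (1 + (f1 y)^2)^3 - (f2 y)^2 * (3 * (1 + (f1 y)^2)^2 * (2 * f1 y * f2 y))) / ((1 + (f1 y)^2)^3)^2) (at y)"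
      using d[OF y] p by (auto intro!: derivative_eq_intros simp: field_simps power2_eq_square)
    have Z: "2 * f2 y * f3 y * (1 + (f1 y)^2)^3 - (f2 y)^2 * (3 * (1 + (f1 y)^2)^2 * (2 * f1 y * f2 y)) = 0"
    proof -
      have "2 * f2 y * f3 y * (1 + (f1 y)^2)^3 = 2 * f2 y * (f3 y * (1 + (f1 y)^2)) * (1 + (f1 y)^2)^2"
        by (simp add: power3_eq_cube power2_eq_square)
      also have "\<dots> = 2 * f2 y * (3 * f1 y * (f2 y)^2) * (1 + (f1 y)^2)^2" using o[OF y] by simp
      finally show ?thesis by (simp add: power2_eq_square)
    qed
    show "((\<lambda>y. (f2 y)^2 / (1 + (f1 y)^2)^3) has_real_derivative 0) (at y)" using D unfolding Z by simp
  qed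
  then obtain K0 where K0: "\<forall>y\<in>?S. (f2 y)^2 / (1 + (f1 y)^2)^3 = K0" by blast
  show ?thesis
  proof (cases "K0 = 0")
    case True
    have z: "\<And>y. y \<in> ?S \<Longrightarrow> f2 y = 0"
    proof -
      fix y assume y: "y \<in> ?S"
      have "(f2 y)^2 / (1 + (f1 y)^2)^3 = 0" using K0 True y by blast
      then show "f2 y = 0" using pos[of y] by simp
    qed
    have "\<exists>m. \<forall>y\<in>?S. f1 y = m"
      by (rule const_on) (use d z in force)
    then obtain m where m: "\<forall>y\<in>?S. f1 y = m" by blast
    have "\<exists>c. \<forall>y\<in>?S. f y - m * y = c"
    proof (rule const_on)
      fix y assume y: "y \<in> ?S"
      show "((\<lambda>y. f y - m * y) has_real_derivative 0) (at y)"
        using d[OF y] m y by (auto intro!: derivative_eq_intros)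
    qed
    then obtain c where c: "\<forall>y\<in>?S. f y - m * y = c" by blast
    show ?thesis
    proof (intro exI conjI)
      show "(0::real, - m / 2, 1 / 2::real) \<noteq> (0, 0, 0)" by simp
      show "\<forall>x\<in>?S. 0 * (x ^ 2 + (f x) ^ 2) - 2 * (- m / 2) * x - 2 * (1/2) * f x + c = 0"
        using c by auto
    qed
  next
    case False
    then have z: "\<And>y. y \<in> ?S \<Longrightarrow> f2 y \<noteq> 0" using K0 by fastforce
    have "\<exists>X0. \<forall>y\<in>?S. y - f1 y * (1 + (f1 y)^2) / f2 y = X0"
    proof (rule const_on)
      fix y assume y: "y \<in> ?S"
      have q: "f2 y \<noteq> 0" using z y by blast
      have "((\<lambda>y. y - f1 y * (1 + (f1 y)^2) / f2 y) has_real_derivative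
        1 - ((f2 y * (1 + (f1 y)^2) + f1 y * (2 * f1 y * f2 y)) * f2 y - f1 y * (1 + (f1 y)^2) * f3 y) / (f2 y)^2) (at y)"
        using d[OF y] q by (auto intro!: derivative_eq_intros simp: field_simps power2_eq_square)
      moreover have "1 - ((f2 y * (1 + (f1 y)^2) + f1 y * (2 * f1 y * f2 y)) * f2 y - f1 y * (1 + (f1 y)^2) * f3 y) / (f2 y)^2 = 0"
      proof -
        have "f1 y * (1 + (f1 y)^2) * f3 y = f1 y * (3 * f1 y * (f2 y)^2)" using o[OF y] by (simp add: ac_simps)
        then show ?thesis using q by (simp add: field_simps power2_eq_square)
      qed
      ultimately show "((\<lambda>y. y - f1 y * (1 + (f1 y)^2) / f2 y) has_real_derivative 0) (at y)" by simp
    qed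
    then obtain X0 where X0: "\<forall>y\<in>?S. y - f1 y * (1 + (f1 y)^2) / f2 y = X0" by blast
    have "\<exists>Y0. \<forall>y\<in>?S. f y + (1 + (f1 y)^2) / f2 y = Y0"
    proof (rule const_on)
      fix y assume y: "y \<in> ?S"
      have q: "f2 y \<noteq> 0" using z y by blast
      have "((\<lambda>y. f y + (1 + (f1 y)^2) / f2 y) has_real_derivative
        f1 y + ((2 * f1 y * f2 y) * f2 y - (1 + (f1 y)^2) * f3 y) / (f2 y)^2) (at y)"
        using d[OF y] q by (auto intro!: derivative_eq_intros simp: field_simps power2_eq_square)
      moreover have "f1 y + ((2 * f1 y * f2 y) * f2 y - (1 + (f1 y)^2) * f3 y) / (f2 y)^2 = 0"
      proof -
        have "(1 + (f1 y)^2) * f3 y = 3 * f1 y * (f2 y)^2" using o[OF y] by (simp add: ac_simps)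
        then show ?thesis using q by (simp add: field_simps power2_eq_square)
      qed
      ultimately show "((\<lambda>y. f y + (1 + (f1 y)^2) / f2 y) has_real_derivative 0) (at y)" by simp
    qed
    then obtain Y0 where Y0: "\<forall>y\<in>?S. f y + (1 + (f1 y)^2) / f2 y = Y0" by blast
    show ?thesis
    proof (intro exI conjI)
      show "(1::real, X0, Y0) \<noteq> (0, 0, 0)" by simp
      show "\<forall>x\<in>?S. 1 * (x ^ 2 + (f x) ^ 2) - 2 * X0 * x - 2 * Y0 * f x + (X0^2 + Y0^2 - 1 / K0) = 0"
      proof
        fix x assume x: "x \<in> ?S"
        have q: "f2 x \<noteq> 0" using z x by blast
        have p3: "(1 + (f1 x)^2)^3 \<noteq> 0" using pos[of x] by simp
        have e1: "x - X0 = f1 x * (1 + (f1 x)^2) / f2 x" using X0 x by force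
        have e2: "f x - Y0 = - ((1 + (f1 x)^2) / f2 x)" using Y0 x by force
        have k: "1 / K0 = (1 + (f1 x)^2)^3 / (f2 x)^2" using K0 x by force
        have "(x - X0)^2 + (f x - Y0)^2 = 1 / K0"
          unfolding e1 e2 k using q by (simp add: field_simps power2_eq_square power3_eq_cube)
        then show "1 * (x ^ 2 + (f x) ^ 2) - 2 * X0 * x - 2 * Y0 * f x + (X0^2 + Y0^2 - 1 / K0) = 0"
          by (simp add: power2_eq_square algebra_simps)
      qed
    qed
  qed
qed



lemma Phi_alt: "Phi l = (\<lambda>u. (fst u, fst (snd u), tan (fst (snd (snd u))),
   - (inverse l) * tan (snd (snd (snd u))) * (inverse (cos (fst (snd (snd u))))) ^ 3))"
  unfolding Phi_def by (auto simp: fun_eq_iff split: prod.splits)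

definition DPhi :: "real \<Rightarrow> pt4 \<Rightarrow> pt4 \<Rightarrow> pt4" where
 "DPhi l u h = (fst h, fst (snd h), fst (snd (snd h)) / (cos (fst (snd (snd u))))^2,
    - (inverse l) * (snd (snd (snd h)) / (cos (snd (snd (snd u))))^2 * (inverse (cos (fst (snd (snd u))))) ^ 3
     + tan (snd (snd (snd u))) * (3 * sin (fst (snd (snd u))) / (cos (fst (snd (snd u))))^4 * fst (snd (snd h)))))"

lemma t1: "cos (fst (snd (snd u))) \<noteq> 0 \<Longrightarrow> cos (snd (snd (snd u))) \<noteq> 0 \<Longrightarrow> (Phi l has_derivative DPhi l u) (at u)"
  unfolding Phi_alt
  apply (rule derivative_eq_intros refl | simp)+
  apply (auto simp: DPhi_def fun_eq_iff divide_simps)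
  apply algebra
  done

lemma t2: "(\<lambda>w::pt4. (fst w, fst (snd w), arctan (fst (snd (snd w))) + k, 
   arctan (- l * snd (snd (snd w)) * cos (arctan (fst (snd (snd w))) + k) ^ 3) + j)) differentiable at w"
  apply (rule differentiableI)
  apply (rule derivative_eq_intros refl)+
  done



lemma span3: assumes "l > 0" shows "maps_span_on (Phi l) M_dom X3 vert"
  unfolding maps_span_on_def
proof
  fix u assume "u \<in> M_dom"
  then obtain x y a b where u: "u = (x,y,a,b)" and ca: "cos a \<noteq> 0" and cb: "cos b \<noteq> 0"
    unfolding M_dom_def by auto
  show "\<exists>D. (Phi l has_derivative D) (at u) \<and> (\<exists>c. c \<noteq> 0 \<and> D (X3 u) = c *\<^sub>R vert (Phi l u))"
  proof (intro exI conjI)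
    show "(Phi l has_derivative DPhi l u) (at u)" using t1 ca cb u by simp
    show "- inverse l / (cos b)^2 * inverse (cos a)^3 \<noteq> 0" using ca cb assms by simp
    show "DPhi l u (X3 u) = (- inverse l / (cos b)^2 * inverse (cos a)^3) *\<^sub>R vert (Phi l u)"
      unfolding u DPhi_def X3_def vert_def by simp
  qed
qed

lemma span4: assumes "l > 0" shows "maps_span_on (Phi l) M_dom (X4 l) (total_deriv F_circ)"
  unfolding maps_span_on_def
proof
  fix u assume "u \<in> M_dom"
  then obtain x y a b where u: "u = (x,y,a,b)" and ca: "cos a \<noteq> 0" and cb: "cos b \<noteq> 0"
    unfolding M_dom_def by auto
  show "\<exists>D. (Phi l has_derivative D) (at u) \<and> (\<exists>c. c \<noteq> 0 \<and> D (X4 l u) = c *\<^sub>R total_deriv F_circ (Phi l u))"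
  proof (intro exI conjI)
    show "(Phi l has_derivative DPhi l u) (at u)" using t1 ca cb u by simp
    show "l * cos b * cos a \<noteq> 0" using ca cb assms by simp
    have p: "1 + (sin a / cos a)^2 = 1 / (cos a)^2" using ca
      by (simp add: field_simps sin_squared_eq)
    show "DPhi l u (X4 l u) = (l * cos b * cos a) *\<^sub>R total_deriv F_circ (Phi l u)"
      unfolding u DPhi_def X4_def total_deriv_def Phi_def F_circ_def
      using ca cb assms
      apply (simp add: tan_def p)
      apply (simp add: field_simps)
      apply (intro conjI disjI2; algebra)
      done
  qed
qed



lemma cos_nz:
  assumes "-(pi/2) < t - of_int k * pi" "t - of_int k * pi < pi/2"
  shows "cos t \<noteq> 0"
proof
  assume "cos t = 0"
  then obtain n :: int where n: "t = of_int n * pi + pi/2" using cos_zero_iff_int2 by blast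
  have e: "t - of_int k * pi = of_int (n - k) * pi + pi/2" using n by (simp add: algebra_simps)
  have "- pi < of_int (n - k) * pi" using assms(1) e by linarith
  then have "-1 < real_of_int (n - k)"
    by (metis mult_less_cancel_right_pos mult_minus_left mult_1 pi_gt_zero)
  moreover have "of_int (n - k) * pi < 0" using assms(2) e by linarith
  then have "real_of_int (n - k) < 0" by (simp add: mult_less_0_iff)
  ultimately have "(-1::int) < n - k" "n - k < 0" by linarith+
  then show False by linarith
qed

lemma arctan_shift:
  assumes "-(pi/2) < t - of_int k * pi" "t - of_int k * pi < pi/2"
  shows "arctan (tan t) + of_int k * pi = t"
proof -
  have "tan t = tan ((t - of_int k * pi) + of_int k * pi)" by simp
  also have "\<dots> = tan (t - of_int k * pi)" by (rule tan_periodic_int)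
  finally have "arctan (tan t) = t - of_int k * pi" using arctan_tan assms by simp
  then show ?thesis by simp
qed

lemma diffeo: assumes "l > 0" shows "local_diffeo_on (Phi l) M_dom"
  unfolding local_diffeo_on_def
proof
  fix u assume "u \<in> M_dom"
  then obtain x0 y0 a0 b0 where u: "u = (x0,y0,a0,b0)" and ca: "cos a0 \<noteq> 0" and cb: "cos b0 \<noteq> 0"
    unfolding M_dom_def by auto
  obtain k where k: "arctan (tan a0) = a0 - of_int k * pi" using arctan_tan_eq_abs_pi[OF ca] by blast
  obtain j where j: "arctan (tan b0) = b0 - of_int j * pi" using arctan_tan_eq_abs_pi[OF cb] by blast
  define V where "V = {v::pt4. -(pi/2) < fst (snd (snd v)) - of_int k * pi \<and> fst (snd (snd v)) - of_int k * pi < pi/2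
     \<and> -(pi/2) < snd (snd (snd v)) - of_int j * pi \<and> snd (snd (snd v)) - of_int j * pi < pi/2}"
  define g where "g = (\<lambda>w::pt4. (fst w, fst (snd w), arctan (fst (snd (snd w))) + of_int k * pi,
     arctan (- l * snd (snd (snd w)) * cos (arctan (fst (snd (snd w))) + of_int k * pi) ^ 3) + of_int j * pi))"
  have oV: "open V" unfolding V_def
    by (intro open_Collect_conj open_Collect_less continuous_intros)
  have uV: "u \<in> V" unfolding V_def u using k j arctan_bounded[of "tan a0"] arctan_bounded[of "tan b0"] by auto
  have VM: "V \<subseteq> M_dom" unfolding V_def M_dom_def using cos_nz by auto
  have gP: "\<forall>v\<in>V. g (Phi l v) = v"
  proof
    fix v assume v: "v \<in> V"
    obtain x y a b where vv: "v = (x,y,a,b)" by (cases v) auto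
    have ak: "-(pi/2) < a - of_int k * pi" "a - of_int k * pi < pi/2"
      and bj: "-(pi/2) < b - of_int j * pi" "b - of_int j * pi < pi/2" using v unfolding V_def vv by auto
    have ca: "cos a \<noteq> 0" using cos_nz[OF ak] .
    have A: "arctan (tan a) + of_int k * pi = a" using arctan_shift[OF ak] .
    have B: "arctan (tan b) + of_int j * pi = b" using arctan_shift[OF bj] .
    have C: "- l * (- inverse l * tan b * inverse (cos a) ^ 3) * cos a ^ 3 = tan b"
      using ca assms by (simp add: field_simps)
    have "g (Phi l v) = (x, y, arctan (tan a) + of_int k * pi,
      arctan (- l * (- inverse l * tan b * inverse (cos a) ^ 3) * cos (arctan (tan a) + of_int k * pi) ^ 3) + of_int j * pi)"
      by (simp add: g_def vv Phi_def)
    also have "\<dots> = v" by (simp only: A C B vv)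
    finally show "g (Phi l v) = v" .
  qed
  have Pg: "\<forall>w. Phi l (g w) = w \<and> g w \<in> V"
  proof
    fix w :: pt4
    obtain x y p q where ww: "w = (x,y,p,q)" by (cases w) auto
    define c where "c = cos (arctan p + of_int k * pi)"
    define z where "z = - l * q * c ^ 3"
    have bnd: "-(pi/2) < arctan p + of_int k * pi - of_int k * pi" "arctan p + of_int k * pi - of_int k * pi < pi/2"
      using arctan_bounded[of p] by auto
    have bnd2: "-(pi/2) < arctan z + of_int j * pi - of_int j * pi" "arctan z + of_int j * pi - of_int j * pi < pi/2"
      using arctan_bounded[of z] by auto
    have c: "c \<noteq> 0" unfolding c_def using cos_nz[OF bnd] .
    have T1: "tan (arctan p + of_int k * pi) = p" by (simp add: tan_arctan)
    have T2: "tan (arctan z + of_int j * pi) = z" by (simp add: tan_arctan)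
    have "- inverse l * z * inverse c ^ 3 = q" unfolding z_def using c assms by (simp add: field_simps)
    then have "Phi l (g w) = w" unfolding g_def ww Phi_def using T1 T2
      by (simp add: c_def[symmetric] tan_arctan z_def)
    moreover have "g w \<in> V" unfolding g_def ww V_def
      using arctan_bounded[of "- (l * q * c ^ 3)"] arctan_bounded[of p] by (simp add: c_def[symmetric])
    ultimately show "Phi l (g w) = w \<and> g w \<in> V" by blast
  qed
  have img: "Phi l ` V = UNIV"
    using Pg by (metis UNIV_eq_I image_eqI)
  have dP: "Phi l differentiable_on V"
  proof (rule differentiable_at_imp_differentiable_on)
    fix v assume "v \<in> V"
    then have "v \<in> M_dom" using VM by blast
    then have "cos (fst (snd (snd v))) \<noteq> 0" "cos (snd (snd (snd v))) \<noteq> 0"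
      unfolding M_dom_def by auto
    then show "Phi l differentiable at v" using t1 differentiableI by blast
  qed
  have dg: "g differentiable_on UNIV"
    by (rule differentiable_at_imp_differentiable_on) (unfold g_def, rule t2)
  show "\<exists>V W g. open V \<and> u \<in> V \<and> V \<subseteq> M_dom \<and> open W \<and> Phi l ` V = W \<and>
        (\<forall>v\<in>V. g (Phi l v) = v) \<and> (\<forall>w\<in>W. Phi l (g w) = w) \<and>
        Phi l differentiable_on V \<and> g differentiable_on W"
    using oV uV VM img gP Pg dP dg by blast
qed

theorem mainTheorem2:
  fixes l :: real
  assumes "l > 0"
  shows "local_diffeo_on (Phi l) M_dom
    \<and> maps_span_on (Phi l) M_dom X3 vert
    \<and> maps_span_on (Phi l) M_dom (X4 l) (total_deriv F_circ)
    \<and> (\<forall>(a::real) b f f1 f2 f3. a < b \<longrightarrow> thrice_diff f f1 f2 f3 {a<..<b} \<longrightarrow>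
         ((\<forall>x\<in>{a<..<b}. f3 x = F_circ x (f x) (f1 x) (f2 x)) \<longleftrightarrow>
          (\<exists>\<nu> \<xi> \<eta> \<mu>::real. (\<nu>, \<xi>, \<eta>) \<noteq> (0, 0, 0) \<and>
             (\<forall>x\<in>{a<..<b}. \<nu> * (x ^ 2 + (f x) ^ 2) - 2 * \<xi> * x - 2 * \<eta> * f x + \<mu> = 0))))"
proof -
  have P4: "\<forall>(a::real) b f f1 f2 f3. a < b \<longrightarrow> thrice_diff f f1 f2 f3 {a<..<b} \<longrightarrow>
         ((\<forall>x\<in>{a<..<b}. f3 x = F_circ x (f x) (f1 x) (f2 x)) \<longleftrightarrow>
          (\<exists>\<nu> \<xi> \<eta> \<mu>::real. (\<nu>, \<xi>, \<eta>) \<noteq> (0, 0, 0) \<and>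
             (\<forall>x\<in>{a<..<b}. \<nu> * (x ^ 2 + (f x) ^ 2) - 2 * \<xi> * x - 2 * \<eta> * f x + \<mu> = 0)))"
  proof (intro allI impI iffI)
    fix a b :: real and f f1 f2 f3 :: "real \<Rightarrow> real"
    assume td: "thrice_diff f f1 f2 f3 {a<..<b}"
    {
      assume "\<forall>x\<in>{a<..<b}. f3 x = F_circ x (f x) (f1 x) (f2 x)"
      then show "\<exists>\<nu> \<xi> \<eta> \<mu>::real. (\<nu>, \<xi>, \<eta>) \<noteq> (0, 0, 0) \<and>
             (\<forall>x\<in>{a<..<b}. \<nu> * (x ^ 2 + (f x) ^ 2) - 2 * \<xi> * x - 2 * \<eta> * f x + \<mu> = 0)"
        by (rule ode_fwd[OF td])
    }
    {
      assume "\<exists>\<nu> \<xi> \<eta> \<mu>::real. (\<nu>, \<xi>, \<eta>) \<noteq> (0, 0, 0) \<and>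
             (\<forall>x\<in>{a<..<b}. \<nu> * (x ^ 2 + (f x) ^ 2) - 2 * \<xi> * x - 2 * \<eta> * f x + \<mu> = 0)"
      then obtain \<nu> \<xi> \<eta> \<mu> where nz: "(\<nu>, \<xi>, \<eta>) \<noteq> (0::real, 0::real, 0::real)"
        and eq: "\<forall>x\<in>{a<..<b}. \<nu> * (x ^ 2 + (f x) ^ 2) - 2 * \<xi> * x - 2 * \<eta> * f x + \<mu> = 0" by blast
      show "\<forall>x\<in>{a<..<b}. f3 x = F_circ x (f x) (f1 x) (f2 x)"
        using ode_back[OF td nz eq] by blast
    }
  qed
  show ?thesis by (intro conjI diffeo[OF assms] span3[OF assms] span4[OF assms] P4)
qed

end
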